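(* Let $B:=M_n(\mathbb{C})$, let $R$ be a tolerance relation on $\{1,\ldots,n\}$ and let $A=A(R)\subset M_n(\mathbb{C})$ be the subspace of matrices $a$ with $a_{ij}=0$ whenever $(i,j)\notin R$. Let $F:\mathcal{S}(B)\to\mathcal{S}(A)$ be the map restricting states of $B$ to $A$. The following are equivalent: (i) $F$ is injective; (ii) the restriction of $F$ to pure states of $B$ is injective; (iii) $A=B=M_n(\mathbb{C})$.
   Context: A tolerance relation on a set $X$ is a reflexive and symmetric relation $R\subset X\times X$. $A(R)$ is an operator system in $M_n(\mathbb{C})$ (it contains the identity and is closed under adjoints). A state of $A$ is a linear functional $\varphi:A\to\mathbb{C}$ with $\varphi(a)\ge0$ for every positive semidefinite $a\in A$ and $\varphi(1)=1$; $\mathcal{S}(\cdot)$ denotes the set of states; pure states are extremal states. *)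

theory Defs
  imports "HOL-Analysis.Analysis"
begin

text \<open>n x n complex matrices are modelled as complex^'n^'n for a finite index type 'n
  (with CARD('n) = n); the index set {1..n} is the type 'n.\<close>

type_synonym 'n cmat = "complex^'n^'n"

definition tolerance_rel :: "('n \<times> 'n) set \<Rightarrow> bool" where
  "tolerance_rel R \<longleftrightarrow> (\<forall>i. (i, i) \<in> R) \<and> sym R"

definition A_of :: "('n::finite \<times> 'n) set \<Rightarrow> 'n cmat set" where
  "A_of R = {a. \<forall>i j. (i, j) \<notin> R \<longrightarrow> a $ i $ j = 0}"

definition cscale :: "complex \<Rightarrow> 'n::finite cmat \<Rightarrow> 'n cmat" where
  "cscale c a = (\<chi> i j. c * a $ i $ j)"

definition psd :: "'n::finite cmat \<Rightarrow> bool" where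
  "psd a \<longleftrightarrow> (\<forall>x :: complex^'n.
     let q = (\<Sum>i\<in>UNIV. \<Sum>j\<in>UNIV. cnj (x $ i) * a $ i $ j * x $ j)
     in Im q = 0 \<and> 0 \<le> Re q)"

text \<open>A state of the subspace A, represented by a function on all matrices whose
  values outside A are irrelevant.\<close>
definition state_on :: "'n::finite cmat set \<Rightarrow> ('n cmat \<Rightarrow> complex) \<Rightarrow> bool" where
  "state_on A \<phi> \<longleftrightarrow>
     (\<forall>a\<in>A. \<forall>b\<in>A. \<phi> (a + b) = \<phi> a + \<phi> b) \<and>
     (\<forall>c. \<forall>a\<in>A. \<phi> (cscale c a) = c * \<phi> a) \<and>
     (\<forall>a\<in>A. psd a \<longrightarrow> Im (\<phi> a) = 0 \<and> 0 \<le> Re (\<phi> a)) \<and>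
     \<phi> (mat 1) = 1"

definition pure_state :: "('n::finite cmat \<Rightarrow> complex) \<Rightarrow> bool" where
  "pure_state \<phi> \<longleftrightarrow> state_on UNIV \<phi> \<and>
     (\<forall>\<psi>1 \<psi>2 (t::real). state_on UNIV \<psi>1 \<and> state_on UNIV \<psi>2 \<and> 0 < t \<and> t < 1 \<and>
        \<phi> = (\<lambda>a. of_real t * \<psi>1 a + of_real (1 - t) * \<psi>2 a) \<longrightarrow> \<psi>1 = \<phi> \<and> \<psi>2 = \<phi>)"

end

theory Submission
  imports Defs
begin

definition ev :: "'n::finite \<Rightarrow> complex^'n" where
  "ev k = (\<chi> p. if p = k then 1 else 0)"
definition outer :: "complex^'n \<Rightarrow> complex^'n \<Rightarrow> 'n::finite cmat" where
  "outer u v = (\<chi> p q. u$p * cnj (v$q))"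
definition EE :: "'n::finite \<Rightarrow> 'n \<Rightarrow> 'n cmat" where
  "EE k l = outer (ev k) (ev l)"
definition vx :: "'n::finite \<Rightarrow> 'n \<Rightarrow> complex \<Rightarrow> complex^'n" where
  "vx i j s = (\<chi> k. if k = i then 1 else if k = j then s else 0)"
definition vst :: "complex^'n \<Rightarrow> 'n::finite cmat \<Rightarrow> complex" where
  "vst x a = (\<Sum>k\<in>UNIV. \<Sum>l\<in>UNIV. cnj (x$k) * a$k$l * x$l) / 2"

lemma sum_two:
  fixes f :: "'n::finite \<Rightarrow> 'b::comm_monoid_add"
  assumes "i \<noteq> j" "\<And>k. k \<noteq> i \<Longrightarrow> k \<noteq> j \<Longrightarrow> f k = 0"
  shows "sum f UNIV = f i + f j"
proof -
  have "sum f UNIV = sum f {i,j}"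
    by (rule sum.mono_neutral_right) (use assms in auto)
  then show ?thesis using assms by simp
qed

lemma EE_comp: "EE k l $ p $ q = (if p = k \<and> q = l then 1 else 0)"
  by (simp add: EE_def outer_def ev_def)

lemma state_add: "state_on UNIV \<psi> \<Longrightarrow> \<psi> (a + b) = \<psi> a + \<psi> b"
  by (simp add: state_on_def)
lemma state_scale: "state_on UNIV \<psi> \<Longrightarrow> \<psi> (cscale c a) = c * \<psi> a"
  by (simp add: state_on_def)
lemma state_psd: "state_on UNIV \<psi> \<Longrightarrow> psd a \<Longrightarrow> Im (\<psi> a) = 0 \<and> 0 \<le> Re (\<psi> a)"
  by (simp add: state_on_def)
lemma state_zero: "state_on UNIV \<psi> \<Longrightarrow> \<psi> 0 = 0"
proof -
  assume s: "state_on UNIV \<psi>"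
  have "cscale 0 (0::'a cmat) = 0" by (simp add: cscale_def vec_eq_iff)
  then show ?thesis using state_scale[OF s, of 0 0] by simp
qed
lemma state_sum: assumes "state_on UNIV \<psi>" "finite S" shows "\<psi> (\<Sum>k\<in>S. f k) = (\<Sum>k\<in>S. \<psi> (f k))"
  using assms(2) by (induction S rule: finite_induct) (simp_all add: state_zero[OF assms(1)] state_add[OF assms(1)])

lemma sum_delta2: "(\<Sum>l\<in>(UNIV::'n::finite set). if P \<and> q = l then f l else 0) = (if P then f q else (0::complex))"
  by (cases P) simp_all

lemma mat_decomp: "(a::'n::finite cmat) = (\<Sum>k\<in>UNIV. \<Sum>l\<in>UNIV. cscale (a$k$l) (EE k l))"
proof -
  have "(\<Sum>k\<in>UNIV. \<Sum>l\<in>UNIV. cscale (a$k$l) (EE k l)) $ p $ q = a $ p $ q" for p q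
  proof -
    have "(\<Sum>k\<in>UNIV. \<Sum>l\<in>UNIV. cscale (a$k$l) (EE k l)) $ p $ q
        = (\<Sum>k\<in>UNIV. \<Sum>l\<in>UNIV. (if p = k \<and> q = l then a$k$l else 0))"
      unfolding sum_component cscale_def EE_comp vec_lambda_beta
      by (intro sum.cong refl) simp
    also have "\<dots> = (\<Sum>k\<in>UNIV. if p = k then a$k$q else 0)"
      unfolding sum_delta2 ..
    also have "\<dots> = a$p$q" by simp
    finally show ?thesis .
  qed
  then show ?thesis by (simp add: vec_eq_iff)
qed

lemma state_decomp: "state_on UNIV \<psi> \<Longrightarrow> \<psi> a = (\<Sum>k\<in>UNIV. \<Sum>l\<in>UNIV. a$k$l * \<psi> (EE k l))"
  apply (subst mat_decomp[of a])
  apply (simp add: state_sum state_scale)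
  done

lemma outer_psd: "psd (outer w w)"
  unfolding psd_def Let_def
proof
  fix x :: "complex^'a"
  define z where "z = (\<Sum>i\<in>UNIV. cnj (x$i) * w$i)"
  have "(\<Sum>i\<in>UNIV. \<Sum>j\<in>UNIV. cnj (x $ i) * outer w w $ i $ j * x $ j) = z * cnj z"
    unfolding z_def cnj_sum by (simp add: outer_def sum_product mult_ac)
  also have "\<dots> = of_real ((Re z)\<^sup>2 + (Im z)\<^sup>2)" by (rule complex_mult_cnj)
  finally show "Im (\<Sum>i\<in>UNIV. \<Sum>j\<in>UNIV. cnj (x $ i) * outer w w $ i $ j * x $ j) = 0 \<and>
      0 \<le> Re (\<Sum>i\<in>UNIV. \<Sum>j\<in>UNIV. cnj (x $ i) * outer w w $ i $ j * x $ j)"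
    by simp
qed

lemma real_lin_zero:
  fixes \<sigma> \<gamma> :: complex
  assumes h: "\<And>t::real. Im (of_real t * \<sigma> + \<gamma>) = 0 \<and> 0 \<le> Re (of_real t * \<sigma> + \<gamma>)"
  shows "\<sigma> = 0"
proof (rule complex_eqI)
  have "Im \<gamma> = 0" using h[of 0] by simp
  moreover have "Im \<sigma> + Im \<gamma> = 0" using h[of 1] by simp
  ultimately show "Im \<sigma> = Im 0" by simp
  show "Re \<sigma> = Re 0"
  proof (rule ccontr)
    assume ne: "Re \<sigma> \<noteq> Re 0"
    define t where "t = - (Re \<gamma> + 1) / Re \<sigma>"
    have "t * Re \<sigma> + Re \<gamma> = -1" using ne by (simp add: t_def field_simps)
    moreover have "0 \<le> t * Re \<sigma> + Re \<gamma>" using h[of t] by simp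
    ultimately show False by simp
  qed
qed

lemma kill:
  assumes s: "state_on UNIV \<psi>" and z: "\<psi> (outer u u) = 0"
  shows "\<psi> (outer u v) = 0 \<and> \<psi> (outer v u) = 0"
proof -
  define \<alpha> where "\<alpha> = \<psi> (outer u v)"
  define \<beta> where "\<beta> = \<psi> (outer v u)"
  define \<gamma> where "\<gamma> = \<psi> (outer v v)"
  have val: "\<psi> (outer (\<chi> k. c * u$k + v$k) (\<chi> k. c * u$k + v$k)) = c * \<alpha> + cnj c * \<beta> + \<gamma>" for c
  proof -
    have "outer (\<chi> k. c * u$k + v$k) (\<chi> k. c * u$k + v$k) =
       cscale (c * cnj c) (outer u u) + cscale c (outer u v) + cscale (cnj c) (outer v u) + outer v v"
      by (simp add: vec_eq_iff outer_def cscale_def algebra_simps)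
    then show ?thesis using z by (simp add: state_add[OF s] state_scale[OF s] \<alpha>_def \<beta>_def \<gamma>_def)
  qed
  have pos: "Im (c * \<alpha> + cnj c * \<beta> + \<gamma>) = 0 \<and> 0 \<le> Re (c * \<alpha> + cnj c * \<beta> + \<gamma>)" for c
    using state_psd[OF s outer_psd] val by metis
  have "\<alpha> + \<beta> = 0"
  proof (rule real_lin_zero[of _ \<gamma>])
    fix t :: real
    have "of_real t * (\<alpha> + \<beta>) + \<gamma> = of_real t * \<alpha> + cnj (of_real t) * \<beta> + \<gamma>"
      by (simp add: algebra_simps)
    then show "Im (of_real t * (\<alpha> + \<beta>) + \<gamma>) = 0 \<and> 0 \<le> Re (of_real t * (\<alpha> + \<beta>) + \<gamma>)"
      using pos[of "of_real t"] by simp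
  qed
  moreover have "\<i> * (\<alpha> - \<beta>) = 0"
  proof (rule real_lin_zero[of _ \<gamma>])
    fix t :: real
    have "of_real t * (\<i> * (\<alpha> - \<beta>)) + \<gamma> = (\<i> * of_real t) * \<alpha> + cnj (\<i> * of_real t) * \<beta> + \<gamma>"
      by (simp add: algebra_simps)
    then show "Im (of_real t * (\<i> * (\<alpha> - \<beta>)) + \<gamma>) = 0 \<and> 0 \<le> Re (of_real t * (\<i> * (\<alpha> - \<beta>)) + \<gamma>)"
      using pos[of "\<i> * of_real t"] by simp
  qed
  ultimately have "\<alpha> = 0 \<and> \<beta> = 0" by (simp add: algebra_simps)
  then show ?thesis by (simp add: \<alpha>_def \<beta>_def)
qed

lemma vst_formula:
  assumes ij: "i \<noteq> j"
  shows "vst (vx i j s) a = (a$i$i + s * a$i$j + cnj s * a$j$i + cnj s * s * a$j$j) / 2"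
proof -
  have inner: "(\<Sum>l\<in>UNIV. cnj (vx i j s $ k) * a$k$l * vx i j s $ l)
      = cnj (vx i j s $ k) * a$k$i + cnj (vx i j s $ k) * a$k$j * s" for k
    by (subst sum_two[OF ij]) (auto simp: vx_def ij ij[symmetric])
  have "(\<Sum>k\<in>UNIV. \<Sum>l\<in>UNIV. cnj (vx i j s $ k) * a$k$l * vx i j s $ l)
       = (\<Sum>k\<in>UNIV. cnj (vx i j s $ k) * a$k$i + cnj (vx i j s $ k) * a$k$j * s)"
    by (simp add: inner)
  also have "\<dots> = a$i$i + s * a$i$j + cnj s * a$j$i + cnj s * s * a$j$j"
    by (subst sum_two[OF ij]) (auto simp: vx_def ij ij[symmetric] algebra_simps)
  finally show ?thesis by (simp add: vst_def)
qed

lemma vst_state: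
  assumes ij: "i \<noteq> j" and sv: "s = 1 \<or> s = -1"
  shows "state_on UNIV (vst (vx i j s))"
  unfolding state_on_def
proof (intro conjI ballI allI impI)
  fix a b show "vst (vx i j s) (a + b) = vst (vx i j s) a + vst (vx i j s) b"
    by (simp add: vst_formula[OF ij] algebra_simps add_divide_distrib)
next
  fix c a show "vst (vx i j s) (cscale c a) = c * vst (vx i j s) a"
    by (simp add: vst_formula[OF ij] cscale_def algebra_simps)
next
  fix a :: "'a cmat" assume "psd a"
  then have "Im q = 0 \<and> 0 \<le> Re q" if "q = (\<Sum>k\<in>UNIV. \<Sum>l\<in>UNIV. cnj (vx i j s$k) * a$k$l * vx i j s$l)" for q
    using that unfolding psd_def Let_def by blast
  then show "Im (vst (vx i j s) a) = 0" "0 \<le> Re (vst (vx i j s) a)"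
    unfolding vst_def by auto
next
  show "vst (vx i j s) (mat 1) = 1"
    using sv by (auto simp: vst_formula[OF ij] mat_def ij ij[symmetric])
qed


lemma lin4:
  fixes a b c d :: complex
  assumes "a + b = 0" "c + d = 0" "a + c = 0" "b + d = 0" "a + d = 1"
  shows "a = 1/2 \<and> d = 1/2 \<and> c = -1/2 \<and> b = -1/2"
proof -
  have b: "b = - a" using assms(1) by (metis add.commute add_eq_0_iff)
  have c: "c = - a" using assms(3) by (metis add.commute add_eq_0_iff)
  have d: "d = a" using assms(4) b by (metis add_eq_0_iff minus_minus)
  have "a = 1/2" using assms(5) d by (simp add: field_simps)
  then show ?thesis using b c d by simp
qed

lemma if01_mult: "(if b then 1 else 0) * (x::complex) = (if b then x else 0)"
  by simp

lemma K:
  assumes ij: "i \<noteq> j" and sv: "s = 1 \<or> s = -1" and st: "state_on UNIV \<psi>"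
    and H: "\<And>p. psd p \<Longrightarrow> vst (vx i j s) p = 0 \<Longrightarrow> \<psi> p = 0"
  shows "\<psi> = vst (vx i j s)"
proof -
  define x where "x = vx i j s"
  define P where "P k l = \<psi> (EE k l)" for k l
  have out0: "k \<noteq> i \<Longrightarrow> k \<noteq> j \<Longrightarrow> \<psi> (outer (ev k) (ev k)) = 0" for k
    by (rule H[OF outer_psd]) (simp add: vst_formula[OF ij] outer_def ev_def)
  have Pz1: "k \<noteq> i \<Longrightarrow> k \<noteq> j \<Longrightarrow> P k l = 0" for k l
    using kill[OF st out0] by (simp add: P_def EE_def)
  have Pz2: "l \<noteq> i \<Longrightarrow> l \<noteq> j \<Longrightarrow> P k l = 0" for k l
    using kill[OF st out0] by (simp add: P_def EE_def)
  define u where "u = vx i j (-s)"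
  have u0: "\<psi> (outer u u) = 0"
    by (rule H[OF outer_psd]) (simp only: vst_formula[OF ij], use sv in \<open>auto simp: outer_def u_def vx_def ij ij[symmetric]\<close>)
  have e1: "outer u (ev i) = EE i i + cscale (-s) (EE j i)"
    by (auto simp: vec_eq_iff outer_def ev_def u_def vx_def EE_comp cscale_def ij ij[symmetric])
  have e2: "outer u (ev j) = EE i j + cscale (-s) (EE j j)"
    by (auto simp: vec_eq_iff outer_def ev_def u_def vx_def EE_comp cscale_def ij ij[symmetric])
  have e3: "outer (ev i) u = EE i i + cscale (cnj (-s)) (EE i j)"
    by (auto simp: vec_eq_iff outer_def ev_def u_def vx_def EE_comp cscale_def ij ij[symmetric])
  have e4: "outer (ev j) u = EE j i + cscale (cnj (-s)) (EE j j)"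
    by (auto simp: vec_eq_iff outer_def ev_def u_def vx_def EE_comp cscale_def ij ij[symmetric])
  have q1: "P i i - s * P j i = 0"
    using kill[OF st u0, of "ev i"] by (simp add: e1 state_add[OF st] state_scale[OF st] P_def)
  have q2: "P i j - s * P j j = 0"
    using kill[OF st u0, of "ev j"] by (simp add: e2 state_add[OF st] state_scale[OF st] P_def)
  have q3: "P i i - cnj s * P i j = 0"
    using kill[OF st u0, of "ev i"] by (simp add: e3 state_add[OF st] state_scale[OF st] P_def)
  have q4: "P j i - cnj s * P j j = 0"
    using kill[OF st u0, of "ev j"] by (simp add: e4 state_add[OF st] state_scale[OF st] P_def)
  have "\<psi> (mat 1) = (\<Sum>k\<in>UNIV. P k k)"
    by (subst state_decomp[OF st]) (simp add: P_def mat_def if01_mult)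
  also have "\<dots> = P i i + P j j"
    by (rule sum_two[OF ij]) (simp add: Pz1)
  finally have q5: "P i i + P j j = 1" using st by (simp add: state_on_def)
  have Pv: "P k l = cnj (x$k) * x$l / 2" for k l
  proof (cases "(k = i \<or> k = j) \<and> (l = i \<or> l = j)")
    case True
    from sv show ?thesis
    proof
      assume s1: "s = 1"
      have "P i i = 1/2 \<and> P j j = 1/2 \<and> P i j = 1/2 \<and> P j i = 1/2"
        using q1 q2 q3 q4 q5 unfolding s1 by (simp add: field_simps)
      then show ?thesis using True ij s1 by (auto simp: x_def vx_def)
    next
      assume s1: "s = -1"
      have "P i i = 1/2 \<and> P j j = 1/2 \<and> P i j = -1/2 \<and> P j i = -1/2"
        using q1 q2 q3 q4 q5 unfolding s1 by (intro lin4) simp_all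
      then show ?thesis using True ij s1 by (auto simp: x_def vx_def)
    qed
  next
    case False
    then show ?thesis using Pz1 Pz2 by (auto simp: x_def vx_def)
  qed
  show ?thesis
  proof
    fix a
    have "vst x a = (\<Sum>k\<in>UNIV. \<Sum>l\<in>UNIV. a$k$l * (cnj (x$k) * x$l / 2))"
      by (simp add: vst_def sum_divide_distrib mult_ac)
    then show "\<psi> a = vst (vx i j s) a"
      by (simp add: state_decomp[OF st, of a] Pv[unfolded P_def] x_def)
  qed
qed


lemma vst_pure:
  assumes ij: "i \<noteq> j" and sv: "s = 1 \<or> s = -1"
  shows "pure_state (vst (vx i j s))"
  unfolding pure_state_def
proof (intro conjI allI impI)
  show st: "state_on UNIV (vst (vx i j s))" by (rule vst_state[OF ij sv])
  fix \<psi>1 \<psi>2 :: "'a cmat \<Rightarrow> complex" and t :: real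
  assume h: "state_on UNIV \<psi>1 \<and> state_on UNIV \<psi>2 \<and> 0 < t \<and> t < 1 \<and>
        vst (vx i j s) = (\<lambda>a. of_real t * \<psi>1 a + of_real (1 - t) * \<psi>2 a)"
  then have s1: "state_on UNIV \<psi>1" and s2: "state_on UNIV \<psi>2" and t0: "0 < t" and t1: "t < 1"
    and eq: "\<And>a. vst (vx i j s) a = of_real t * \<psi>1 a + of_real (1 - t) * \<psi>2 a" by auto
  have z: "\<psi>1 p = 0 \<and> \<psi>2 p = 0" if "psd p" "vst (vx i j s) p = 0" for p
  proof -
    have a1: "Im (\<psi>1 p) = 0 \<and> 0 \<le> Re (\<psi>1 p)" by (rule state_psd[OF s1 that(1)])
    have a2: "Im (\<psi>2 p) = 0 \<and> 0 \<le> Re (\<psi>2 p)" by (rule state_psd[OF s2 that(1)])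
    have "Re (of_real t * \<psi>1 p + of_real (1 - t) * \<psi>2 p) = 0" using eq[of p] that(2) by simp
    then have r: "t * Re (\<psi>1 p) + (1 - t) * Re (\<psi>2 p) = 0" by simp
    have p1: "0 \<le> t * Re (\<psi>1 p)" using a1 t0 by simp
    have p2: "0 \<le> (1 - t) * Re (\<psi>2 p)" using a2 t1 by simp
    have "t * Re (\<psi>1 p) = 0" "(1 - t) * Re (\<psi>2 p) = 0" using r p1 p2 by linarith+
    then have "Re (\<psi>1 p) = 0" "Re (\<psi>2 p) = 0" using t0 t1 by simp_all
    then show ?thesis using a1 a2 by (simp add: complex_eq_iff)
  qed
  show "\<psi>1 = vst (vx i j s)" by (rule K[OF ij sv s1]) (use z in blast)
  show "\<psi>2 = vst (vx i j s)" by (rule K[OF ij sv s2]) (use z in blast)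
qed

theorem proposition4p3:
  fixes R :: "('n::finite \<times> 'n) set"
  assumes "tolerance_rel R"
  shows "((\<forall>\<phi> \<psi>. state_on UNIV \<phi> \<and> state_on UNIV \<psi> \<and> (\<forall>a\<in>A_of R. \<phi> a = \<psi> a) \<longrightarrow> \<phi> = \<psi>)
          \<longleftrightarrow> (\<forall>\<phi> \<psi>. pure_state \<phi> \<and> pure_state \<psi> \<and> (\<forall>a\<in>A_of R. \<phi> a = \<psi> a) \<longrightarrow> \<phi> = \<psi>))
       \<and> ((\<forall>\<phi> \<psi>. pure_state \<phi> \<and> pure_state \<psi> \<and> (\<forall>a\<in>A_of R. \<phi> a = \<psi> a) \<longrightarrow> \<phi> = \<psi>)
          \<longleftrightarrow> A_of R = UNIV)"
proof -
  let ?S1 = "\<forall>\<phi> \<psi>. state_on UNIV \<phi> \<and> state_on UNIV \<psi> \<and> (\<forall>a\<in>A_of R. \<phi> a = \<psi> a) \<longrightarrow> \<phi> = \<psi>"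
  let ?S2 = "\<forall>\<phi> \<psi>. pure_state \<phi> \<and> pure_state \<psi> \<and> (\<forall>a\<in>A_of R. \<phi> a = \<psi> a) \<longrightarrow> \<phi> = \<psi>"
  have i12: "?S1 \<Longrightarrow> ?S2" by (auto simp: pure_state_def)
  have i31: "A_of R = UNIV \<Longrightarrow> ?S1" by auto
  have i23: "A_of R = UNIV" if S2: ?S2
  proof (rule ccontr)
    assume "A_of R \<noteq> UNIV"
    then obtain a where "a \<notin> A_of R" by auto
    then obtain i j where nR: "(i, j) \<notin> R" by (auto simp: A_of_def)
    have ij: "i \<noteq> j" using nR assms by (auto simp: tolerance_rel_def)
    have nR2: "(j, i) \<notin> R" using nR assms by (auto simp: tolerance_rel_def sym_def)
    have agree: "\<forall>b\<in>A_of R. vst (vx i j 1) b = vst (vx i j (-1)) b"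
      using nR nR2 by (auto simp: A_of_def vst_formula[OF ij])
    have "vst (vx i j 1) = vst (vx i j (-1))"
      using S2 vst_pure[OF ij, of 1] vst_pure[OF ij, of "-1"] agree by blast
    then have "vst (vx i j 1) (EE i j) = vst (vx i j (-1)) (EE i j)" by simp
    then show False using ij by (simp add: vst_formula[OF ij] EE_comp)
  qed
  show ?thesis using i12 i31 i23 by blast
qed

end
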